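(* In any falsifiable Outcome Logic instance, for every outcome assertion $\varphi$ containing no implications and all $m_1,m_2\in M\Sigma$ with $m_1\diamond m_2$ defined: if $m_1\diamond m_2\vDash\varphi$, then there exist outcome assertions $\varphi_1,\varphi_2$ with $m_1\vDash\varphi_1$, $m_2\vDash\varphi_2$, and $\varphi_1\oplus\varphi_2\Rightarrow\varphi$.
   Context: OL instance: execution model $\langle M,\mathsf{bind},\mathsf{unit},\diamond,\varnothing\rangle$ (monad on sets, with each $(MA,\diamond,\varnothing)$ a partial commutative monoid preserved by $\mathsf{bind}$), program states $\Sigma$, atomic commands $[\![c]\!]\colon\Sigma\to M\Sigma$, atomic assertions with relation $\vDash_{\mathsf{atom}}\subseteq M\Sigma\times\mathsf{Prop}$. Programs $C::=\mathbb{0}\mid\mathbb{1}\mid C_1;C_2\mid C_1+C_2\mid C^\star\mid c$ with the standard monadic semantics ($\mathbb{0}\mapsto\varnothing$, $\mathbb{1}\mapsto\mathsf{unit}$, sequencing by $\mathsf{bind}$, $+$ by $\diamond$, $C^\star$ as least fixed point of $f\mapsto\lambda\sigma.f^\dagger([\![C]\!](\sigma))\diamond\mathsf{unit}(\sigma)$), $[\![C]\!]^\dagger(m)=\mathsf{bind}(m,[\![C]\!])$. Outcome assertions: $\top,\bot,\top^\oplus$ (only $\varnothing$), classical $\land$ and $\Rightarrow$, atomic $P$, and $\oplus$ ($m\vDash\varphi\oplus\psi$ iff $m=m_1\diamond m_2$ with $m_1\vDash\varphi$, $m_2\vDash\psi$); $\lnot\varphi=\varphi\Rightarrow\bot$;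 "no implications" means $\Rightarrow$ (hence $\lnot$) does not occur. $\varphi\Rightarrow\psi$ as a proposition means every $m$ satisfying $\varphi$ satisfies $\psi$; $\vDash\langle\varphi\rangle C\langle\psi\rangle$ iff $m\vDash\varphi$ implies $[\![C]\!]^\dagger(m)\vDash\psi$. The instance is falsifiable if: (1a) $m_1\diamond m_2=\varnothing$ implies $m_1=m_2=\varnothing$; (1b) if $m_1\diamond m_2=n_1\diamond n_2$ then there exist $s_1,s_2,t_1,t_2$ with $s_1\diamond s_2=n_1$, $t_1\diamond t_2=n_2$, $s_1\diamond t_1=m_1$, $s_2\diamond t_2=m_2$; (2) for every atomic $P$, if $m_1\diamond m_2\vDash P$ then there are $\varphi_1,\varphi_2$ with $m_1\vDash\varphi_1$, $m_2\vDash\varphi_2$, $\varphi_1\oplus\varphi_2\Rightarrow P$; (3) for atomic $Q_1,\dots,Q_n$, $m\not\vDash Q_1\oplus\cdots\oplus Q_n$ iff there is an implication-free $\psi$ with $m\vDash\psi$ and $\psi\Rightarrow\lnot(Q_1\oplus\cdots\oplus Q_n)$; (4) for every atomic command $c$ and implication-free $\psi$, if $[\![c]\!]^\dagger(m)\vDash\psi$ then there is an implication-free $\varphi$ with $m\vDash\varphi$ and $\vDash\langle\varphi\rangle c\langle\psi\rangle$. *)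

theory Defs
  imports Main
begin

datatype 'p oassn =
    OTop | OBot | OTopPlus
  | OAnd "'p oassn" "'p oassn"
  | OImp "'p oassn" "'p oassn"
  | OAtom 'p
  | OPlus "'p oassn" "'p oassn"

definition ONot :: "'p oassn \<Rightarrow> 'p oassn" where
  "ONot \<phi> = OImp \<phi> OBot"

fun impl_free :: "'p oassn \<Rightarrow> bool" where
  "impl_free OTop = True"
| "impl_free OBot = True"
| "impl_free OTopPlus = True"
| "impl_free (OAnd a b) = (impl_free a \<and> impl_free b)"
| "impl_free (OImp a b) = False"
| "impl_free (OAtom p) = True"
| "impl_free (OPlus a b) = (impl_free a \<and> impl_free b)"

text \<open>Satisfaction. The partial operation diamond is modelled as comb :: 'm => 'm => 'm option,
  with None meaning undefined; zero is the empty outcome.\<close>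
fun osat :: "('m \<Rightarrow> 'm \<Rightarrow> 'm option) \<Rightarrow> 'm \<Rightarrow> ('m \<Rightarrow> 'p \<Rightarrow> bool)
              \<Rightarrow> 'm \<Rightarrow> 'p oassn \<Rightarrow> bool" where
  "osat comb zero sa m OTop = True"
| "osat comb zero sa m OBot = False"
| "osat comb zero sa m OTopPlus = (m = zero)"
| "osat comb zero sa m (OAnd a b) = (osat comb zero sa m a \<and> osat comb zero sa m b)"
| "osat comb zero sa m (OImp a b) = (osat comb zero sa m a \<longrightarrow> osat comb zero sa m b)"
| "osat comb zero sa m (OAtom p) = sa m p"
| "osat comb zero sa m (OPlus a b) =
     (\<exists>m1 m2. comb m1 m2 = Some m \<and> osat comb zero sa m1 a \<and> osat comb zero sa m2 b)"

definition oentails :: "('m \<Rightarrow> 'm \<Rightarrow> 'm option) \<Rightarrow> 'm \<Rightarrow> ('m \<Rightarrow> 'p \<Rightarrow> bool)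
              \<Rightarrow> 'p oassn \<Rightarrow> 'p oassn \<Rightarrow> bool" where
  "oentails comb zero sa \<phi> \<psi> = (\<forall>m. osat comb zero sa m \<phi> \<longrightarrow> osat comb zero sa m \<psi>)"

fun oplus_atoms :: "'p list \<Rightarrow> 'p oassn" where
  "oplus_atoms [] = OTopPlus"
| "oplus_atoms [q] = OAtom q"
| "oplus_atoms (q # qs) = OPlus (OAtom q) (oplus_atoms qs)"

text \<open>An OL instance, restricted to the carrier M Sigma (the only instance of the monad that
  the definitions below use): unit, bind, partial commutative monoid (comb, zero) preserved by
  bind, and semantics of atomic commands.\<close>
locale OL_instance =
  fixes unit :: "'s \<Rightarrow> 'm"
    and bind :: "'m \<Rightarrow> ('s \<Rightarrow> 'm) \<Rightarrow> 'm"
    and comb :: "'m \<Rightarrow> 'm \<Rightarrow> 'm option"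
    and zero :: "'m"
    and csem :: "'c \<Rightarrow> 's \<Rightarrow> 'm"
    and sa :: "'m \<Rightarrow> 'p \<Rightarrow> bool"
  assumes bind_unit_left: "bind (unit s) f = f s"
    and bind_unit_right: "bind m unit = m"
    and bind_assoc: "bind (bind m f) g = bind m (\<lambda>s. bind (f s) g)"
    and comb_comm: "comb a b = comb b a"
    and comb_assoc: "Option.bind (comb a b) (\<lambda>ab. comb ab c) = Option.bind (comb b c) (\<lambda>bc. comb a bc)"
    and comb_zero: "comb zero a = Some a"
    and bind_zero: "bind zero f = zero"
    and bind_comb: "comb a b = Some ab \<Longrightarrow> comb (bind a f) (bind b f) = Some (bind ab f)"

locale falsifiable_OL = OL_instance +
  assumes f1a: "comb m1 m2 = Some zero \<Longrightarrow> m1 = zero \<and> m2 = zero"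
    and f1b: "comb m1 m2 = Some k \<Longrightarrow> comb n1 n2 = Some k \<Longrightarrow>
        \<exists>s1 s2 t1 t2. comb s1 s2 = Some n1 \<and> comb t1 t2 = Some n2
                    \<and> comb s1 t1 = Some m1 \<and> comb s2 t2 = Some m2"
    and f2: "comb m1 m2 = Some k \<Longrightarrow> sa k P \<Longrightarrow>
        \<exists>\<phi>1 \<phi>2. osat comb zero sa m1 \<phi>1 \<and> osat comb zero sa m2 \<phi>2
               \<and> oentails comb zero sa (OPlus \<phi>1 \<phi>2) (OAtom P)"
    and f3: "Qs \<noteq> [] \<Longrightarrow>
        (\<not> osat comb zero sa m (oplus_atoms Qs)) \<longleftrightarrow>
        (\<exists>\<psi>. impl_free \<psi> \<and> osat comb zero sa m \<psi>
              \<and> oentails comb zero sa \<psi> (ONot (oplus_atoms Qs)))"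
    and f4: "impl_free \<psi> \<Longrightarrow> osat comb zero sa (bind m (csem c)) \<psi> \<Longrightarrow>
        \<exists>\<phi>. impl_free \<phi> \<and> osat comb zero sa m \<phi>
             \<and> (\<forall>m'. osat comb zero sa m' \<phi> \<longrightarrow> osat comb zero sa (bind m' (csem c)) \<psi>)"

end

theory Submission
  imports Defs
begin

context OL_instance
begin

lemma ob_some: "Option.bind x f = Some n \<Longrightarrow> \<exists>y. x = Some y \<and> f y = Some n"
  by (cases x) auto

lemma assoc_fwd: "comb a b = Some ab \<Longrightarrow> comb ab c = Some n \<Longrightarrow>
   \<exists>bc. comb b c = Some bc \<and> comb a bc = Some n"
proof -
  assume h: "comb a b = Some ab" "comb ab c = Some n"
  have "Option.bind (comb a b) (\<lambda>ab. comb ab c) = Some n" using h by simp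
  then have "Option.bind (comb b c) (\<lambda>bc. comb a bc) = Some n" using comb_assoc[of a b c] by simp
  from ob_some[OF this] show ?thesis by blast
qed

lemma assoc_bwd: "comb b c = Some bc \<Longrightarrow> comb a bc = Some n \<Longrightarrow>
   \<exists>ab. comb a b = Some ab \<and> comb ab c = Some n"
proof -
  assume h: "comb b c = Some bc" "comb a bc = Some n"
  have "Option.bind (comb b c) (\<lambda>bc. comb a bc) = Some n" using h by simp
  then have "Option.bind (comb a b) (\<lambda>ab. comb ab c) = Some n" using comb_assoc[of a b c] by simp
  from ob_some[OF this] show ?thesis by blast
qed

lemma rearr:
  assumes "comb x1 y1 = Some n1" "comb x2 y2 = Some n2" "comb n1 n2 = Some n"
  shows "\<exists>u v. comb x1 x2 = Some u \<and> comb y1 y2 = Some v \<and> comb u v = Some n"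
proof -
  obtain w where w: "comb y1 n2 = Some w" "comb x1 w = Some n"
    using assoc_fwd[OF assms(1) assms(3)] by blast
  obtain p where p: "comb y1 x2 = Some p" "comb p y2 = Some w"
    using assoc_bwd[OF assms(2) w(1)] by blast
  have p': "comb x2 y1 = Some p" using p(1) comb_comm[of x2 y1] by simp
  obtain v where v: "comb y1 y2 = Some v" "comb x2 v = Some w"
    using assoc_fwd[OF p' p(2)] by blast
  obtain u where u: "comb x1 x2 = Some u" "comb u v = Some n"
    using assoc_bwd[OF v(2) w(2)] by blast
  show ?thesis using u v by blast
qed

end

context falsifiable_OL
begin

lemma main:
  "impl_free \<phi> \<Longrightarrow> comb m1 m2 = Some m \<Longrightarrow> osat comb zero sa m \<phi> \<Longrightarrow>
   \<exists>\<phi>1 \<phi>2. osat comb zero sa m1 \<phi>1 \<and> osat comb zero sa m2 \<phi>2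
               \<and> oentails comb zero sa (OPlus \<phi>1 \<phi>2) \<phi>"
proof (induction \<phi> arbitrary: m1 m2 m)
  case OTop
  then show ?case by (intro exI[of _ OTop]) (simp add: oentails_def)
next
  case OBot
  then show ?case by simp
next
  case OTopPlus
  then have "m1 = zero" "m2 = zero" using f1a by auto
  then show ?case
    by (intro exI[of _ OTopPlus]) (auto simp add: oentails_def comb_zero)
next
  case (OAnd a b)
  from OAnd.IH(1)[OF _ OAnd.prems(2)] OAnd.prems(1,3) obtain a1 a2 where A: "osat comb zero sa m1 a1" "osat comb zero sa m2 a2"
      "oentails comb zero sa (OPlus a1 a2) a" by auto
  from OAnd.IH(2)[OF _ OAnd.prems(2)] OAnd.prems(1,3) obtain b1 b2 where B: "osat comb zero sa m1 b1" "osat comb zero sa m2 b2"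
      "oentails comb zero sa (OPlus b1 b2) b" by auto
  show ?case
    apply (rule exI[of _ "OAnd a1 b1"], rule exI[of _ "OAnd a2 b2"])
    using A B unfolding oentails_def by auto
next
  case (OImp a b)
  then show ?case by simp
next
  case (OAtom P)
  then show ?case using f2 by simp
next
  case (OPlus a b)
  have ifa: "impl_free a" "impl_free b" using OPlus.prems(1) by simp_all
  from OPlus.prems(3) obtain k1 k2 where k: "comb k1 k2 = Some m"
     "osat comb zero sa k1 a" "osat comb zero sa k2 b" unfolding osat.simps(7) by blast
  obtain s1 s2 t1 t2 where st: "comb s1 s2 = Some k1" "comb t1 t2 = Some k2"
     "comb s1 t1 = Some m1" "comb s2 t2 = Some m2"
    using f1b[OF OPlus.prems(2) k(1)] by blast
  from OPlus.IH(1)[OF ifa(1) st(1) k(2)] obtain a1 a2 where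
    A: "osat comb zero sa s1 a1" "osat comb zero sa s2 a2"
      "oentails comb zero sa (OPlus a1 a2) a" by blast
  from OPlus.IH(2)[OF ifa(2) st(2) k(3)] obtain b1 b2 where
    B: "osat comb zero sa t1 b1" "osat comb zero sa t2 b2"
      "oentails comb zero sa (OPlus b1 b2) b" by blast
  have ent: "oentails comb zero sa (OPlus (OPlus a1 b1) (OPlus a2 b2)) (OPlus a b)"
    unfolding oentails_def
  proof (intro allI impI)
    fix n assume "osat comb zero sa n (OPlus (OPlus a1 b1) (OPlus a2 b2))"
    then obtain n1 n2 x1 y1 x2 y2 where h: "comb n1 n2 = Some n"
      "comb x1 y1 = Some n1" "comb x2 y2 = Some n2"
      "osat comb zero sa x1 a1" "osat comb zero sa y1 b1"
      "osat comb zero sa x2 a2" "osat comb zero sa y2 b2" unfolding osat.simps(7) by blast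
    obtain u v where uv: "comb x1 x2 = Some u" "comb y1 y2 = Some v" "comb u v = Some n"
      using rearr[OF h(2) h(3) h(1)] by blast
    have "osat comb zero sa u a" using A(3) uv(1) h(4,6) unfolding oentails_def osat.simps(7) by blast
    moreover have "osat comb zero sa v b" using B(3) uv(2) h(5,7) unfolding oentails_def osat.simps(7) by blast
    ultimately show "osat comb zero sa n (OPlus a b)" using uv(3) unfolding osat.simps(7) by blast
  qed
  have s1: "osat comb zero sa m1 (OPlus a1 b1)" using st(3) A(1) B(1) unfolding osat.simps(7) by blast
  have s2: "osat comb zero sa m2 (OPlus a2 b2)" using st(4) A(2) B(2) unfolding osat.simps(7) by blast
  show ?case using s1 s2 ent by blast
qed

end

theorem lemmaD3:
  fixes unit :: "'s \<Rightarrow> 'm" and bind :: "'m \<Rightarrow> ('s \<Rightarrow> 'm) \<Rightarrow> 'm"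
    and comb :: "'m \<Rightarrow> 'm \<Rightarrow> 'm option" and zero :: "'m"
    and csem :: "'c \<Rightarrow> 's \<Rightarrow> 'm" and sa :: "'m \<Rightarrow> 'p \<Rightarrow> bool"
    and \<phi> :: "'p oassn"
  assumes "falsifiable_OL unit bind comb zero csem sa"
    and "impl_free \<phi>"
    and "comb m1 m2 = Some m"
    and "osat comb zero sa m \<phi>"
  shows "\<exists>\<phi>1 \<phi>2. osat comb zero sa m1 \<phi>1 \<and> osat comb zero sa m2 \<phi>2
               \<and> oentails comb zero sa (OPlus \<phi>1 \<phi>2) \<phi>"
  using falsifiable_OL.main[OF assms(1) assms(2-4)] .

end
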